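(* Let $A\in\mathbb{R}^{n\times m}$ have distinct columns with $a_1=0$. The following are equivalent: (1) for every $c\in\mathbb{R}^m$, the signomial $f=\mathrm{Sig}(A,c)$ satisfies $f^\star=f_{\mathsf{SAGE}}$; (2) $C_{\mathrm{NNS}}(A)=C_{\mathrm{SAGE}}(A)$; (3) $\{v\in C_{\mathrm{SAGE}}(A)^\dagger: v_1=1\}\subset\mathrm{cl}\,\mathrm{conv}\,\exp\mathcal{R}(A^\top)$.
   Context: For $c\in\mathbb{R}^m$, $\mathrm{Sig}(A,c)$ denotes $x\mapsto\sum_{i=1}^m c_i\exp(a_i^\top x)$. $C_{\mathrm{NNS}}(A)=\{c:\mathrm{Sig}(A,c)(x)\ge 0\ \forall x\in\mathbb{R}^n\}$, $C_{\mathrm{AGE}}(A,k)=\{c\in C_{\mathrm{NNS}}(A): c_i\ge 0\ \forall i\ne k\}$, $C_{\mathrm{SAGE}}(A)=\sum_{k=1}^m C_{\mathrm{AGE}}(A,k)$. For $f=\mathrm{Sig}(A,c)$: $f^\star=\inf_{x}f(x)$ and $f_{\mathsf{SAGE}}=\sup\{\gamma\in\mathbb{R}: c-\gamma e_1\in C_{\mathrm{SAGE}}(A)\}$. $K^\dagger=\{y: y^\top x\ge 0\ \forall x\in K\}$ is the dual cone. $\mathcal{R}(A^\top)=\{A^\top x: x\in\mathbb{R}^n\}\subset\mathbb{R}^m$ is the range of $A^\top$, $\exp$ is applied entrywise to vectors and elementwise to sets, and $\mathrm{cl}\,\mathrm{conv}$ is the closed convex hull. *)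

theory Defs
  imports "HOL-Analysis.Analysis"
begin

text \<open>A is an n x m real matrix (type real^'m^'n); its i-th column is column i A.
  Sig(A,c)(x) = sum_i c_i exp(a_i . x).\<close>
definition Sig :: "real^'m^'n \<Rightarrow> real^'m \<Rightarrow> real^'n \<Rightarrow> real" where
  "Sig A c x = (\<Sum>i\<in>UNIV. c $ i * exp (column i A \<bullet> x))"

definition C_NNS :: "real^'m^'n \<Rightarrow> (real^'m) set" where
  "C_NNS A = {c. \<forall>x. Sig A c x \<ge> 0}"

definition C_AGE :: "real^'m^'n \<Rightarrow> 'm \<Rightarrow> (real^'m) set" where
  "C_AGE A k = {c \<in> C_NNS A. \<forall>i. i \<noteq> k \<longrightarrow> c $ i \<ge> 0}"

definition C_SAGE :: "real^'m^'n \<Rightarrow> (real^'m) set" where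
  "C_SAGE A = {c. \<exists>f :: 'm \<Rightarrow> real^'m. (\<forall>k. f k \<in> C_AGE A k) \<and> c = (\<Sum>k\<in>UNIV. f k)}"

definition f_star :: "real^'m^'n \<Rightarrow> real^'m \<Rightarrow> ereal" where
  "f_star A c = (INF x. ereal (Sig A c x))"

text \<open>SAGE bound; i1 plays the role of the index 1 (with a_1 = 0).
  The supremum of the empty set is -infinity.\<close>
definition f_SAGE :: "real^'m^'n \<Rightarrow> 'm \<Rightarrow> real^'m \<Rightarrow> ereal" where
  "f_SAGE A i1 c = (SUP \<gamma>\<in>{\<gamma>. c - \<gamma> *\<^sub>R axis i1 1 \<in> C_SAGE A}. ereal \<gamma>)"

definition dual_cone :: "('a::real_inner) set \<Rightarrow> 'a set" where
  "dual_cone K = {y. \<forall>x\<in>K. y \<bullet> x \<ge> 0}"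

definition vec_exp :: "real^'m \<Rightarrow> real^'m" where
  "vec_exp v = (\<chi> i. exp (v $ i))"

end

theory Submission
  imports Defs
begin

definition WW :: "real^'m^'n \<Rightarrow> real^'n \<Rightarrow> real^'m" where
  "WW A x = vec_exp (transpose A *v x)"

lemma Sig_inner: "Sig A c x = c \<bullet> WW A x"
  unfolding Sig_def WW_def vec_exp_def inner_vec_def
  by (simp add: transpose_def matrix_vector_mult_def column_def inner_vec_def mult.commute)

lemma WW_i1: "column i1 A = 0 \<Longrightarrow> WW A x $ i1 = 1"
  unfolding WW_def vec_exp_def
  by (simp add: transpose_def matrix_vector_mult_def column_def inner_vec_def vec_eq_iff)

lemma WW_0: "WW A 0 = (\<chi> i. 1)"
  unfolding WW_def vec_exp_def by (simp add: vec_eq_iff)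

lemma NNS_inner: "C_NNS A = {c. \<forall>x. c \<bullet> WW A x \<ge> 0}"
  unfolding C_NNS_def Sig_inner by simp

lemma NNS_add: "c \<in> C_NNS A \<Longrightarrow> d \<in> C_NNS A \<Longrightarrow> c + d \<in> C_NNS A"
  unfolding NNS_inner by (auto simp: inner_add_left add_nonneg_nonneg)

lemma NNS_scale: "c \<in> C_NNS A \<Longrightarrow> t \<ge> 0 \<Longrightarrow> t *\<^sub>R c \<in> C_NNS A"
  unfolding NNS_inner by (auto simp: inner_scaleR_left)

lemma AGE_add: "c \<in> C_AGE A k \<Longrightarrow> d \<in> C_AGE A k \<Longrightarrow> c + d \<in> C_AGE A k"
  unfolding C_AGE_def by (auto simp: NNS_add)

lemma AGE_scale: "c \<in> C_AGE A k \<Longrightarrow> t \<ge> 0 \<Longrightarrow> t *\<^sub>R c \<in> C_AGE A k"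
  unfolding C_AGE_def by (auto simp: NNS_scale)

lemma AGE_zero: "0 \<in> C_AGE A k"
  unfolding C_AGE_def NNS_inner by auto

lemma axis_NNS: "t *\<^sub>R axis i 1 \<in> C_AGE A k" if "t \<ge> 0"
proof -
  have "\<And>x. 0 \<le> (axis i (1::real)) \<bullet> WW A x" by (simp add: inner_axis' WW_def vec_exp_def)
  moreover have "\<And>j. 0 \<le> (axis i (1::real)) $ j" by (simp add: axis_def)
  ultimately show ?thesis using that unfolding C_AGE_def NNS_inner by (auto simp: inner_scaleR_left)
qed

lemma closed_NNS: "closed (C_NNS A)"
proof -
  have "C_NNS A = (\<Inter>x. {c. (WW A x) \<bullet> c \<ge> 0})" unfolding NNS_inner by (auto simp: inner_commute)
  thus ?thesis by (auto intro!: closed_INT closed_halfspace_ge)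
qed

lemma closed_AGE: "closed (C_AGE A k)"
proof -
  have "C_AGE A k = C_NNS A \<inter> (\<Inter>i\<in>{i. i \<noteq> k}. {c. (axis i 1) \<bullet> c \<ge> 0})"
    unfolding C_AGE_def by (auto simp: inner_axis')
  thus ?thesis by (auto intro!: closed_Int closed_INT closed_halfspace_ge closed_NNS)
qed

lemma SAGE_sub_NNS: "C_SAGE A \<subseteq> C_NNS A"
  unfolding C_SAGE_def NNS_inner C_AGE_def
  by (auto simp: inner_sum_left intro!: sum_nonneg)

lemma SAGE_add: "c \<in> C_SAGE A \<Longrightarrow> d \<in> C_SAGE A \<Longrightarrow> c + d \<in> C_SAGE A"
proof -
  assume "c \<in> C_SAGE A" "d \<in> C_SAGE A"
  then obtain f g where f: "\<forall>k. f k \<in> C_AGE A k" "c = (\<Sum>k\<in>UNIV. f k)"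
    and g: "\<forall>k. g k \<in> C_AGE A k" "d = (\<Sum>k\<in>UNIV. g k)"
    unfolding C_SAGE_def by auto
  show "c + d \<in> C_SAGE A" unfolding C_SAGE_def
    by (rule CollectI, rule exI[of _ "\<lambda>k. f k + g k"]) (simp add: f g AGE_add sum.distrib)
qed

lemma SAGE_scale: "c \<in> C_SAGE A \<Longrightarrow> t \<ge> 0 \<Longrightarrow> t *\<^sub>R c \<in> C_SAGE A"
proof -
  assume "c \<in> C_SAGE A" "t \<ge> 0"
  then obtain f where f: "\<forall>k. f k \<in> C_AGE A k" "c = (\<Sum>k\<in>UNIV. f k)"
    unfolding C_SAGE_def by auto
  show "t *\<^sub>R c \<in> C_SAGE A" unfolding C_SAGE_def
    by (rule CollectI, rule exI[of _ "\<lambda>k. t *\<^sub>R f k"]) (simp add: f AGE_scale \<open>t \<ge> 0\<close> scaleR_sum_right)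
qed

lemma SAGE_zero: "0 \<in> C_SAGE A"
  unfolding C_SAGE_def by (rule CollectI, rule exI[of _ "\<lambda>k. 0"]) (simp add: AGE_zero)

lemma SAGE_axis: "t \<ge> 0 \<Longrightarrow> t *\<^sub>R axis i 1 \<in> C_SAGE A"
  unfolding C_SAGE_def
  by (rule CollectI, rule exI[of _ "\<lambda>k. if k = i then t *\<^sub>R axis i 1 else 0"])
     (auto simp: AGE_zero axis_NNS)

lemma convex_SAGE: "convex (C_SAGE A)"
  unfolding convex_def by (auto intro!: SAGE_add SAGE_scale)

lemma WW_nth: "WW A x $ j = exp (column j A \<bullet> x)"
  unfolding WW_def vec_exp_def
  by (simp add: transpose_def matrix_vector_mult_def column_def inner_vec_def mult.commute)

lemma AGE_pointed:
  fixes A :: "real^'m^'n"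
  assumes inj: "inj (\<lambda>i. column i A)" and g: "g \<in> C_AGE A k"
    and z: "\<forall>x. g \<bullet> WW A x = 0"
  shows "g = 0"
proof -
  have gnn: "\<And>j. j \<noteq> k \<Longrightarrow> g $ j \<ge> 0" using g unfolding C_AGE_def by auto
  have sumform: "\<And>x. g \<bullet> WW A x = (\<Sum>j\<in>UNIV. g $ j * exp (column j A \<bullet> x))"
    by (simp add: inner_vec_def WW_nth)
  have nz: "g $ i = 0" if ik: "i \<noteq> k" for i
  proof (rule ccontr)
    assume "g $ i \<noteq> 0"
    with gnn[OF ik] have gi: "g $ i > 0" by auto
    define d where "d = column i A - column k A"
    have "d \<noteq> 0" using ik inj unfolding d_def inj_def by auto
    hence dd: "d \<bullet> d > 0" by simp
    define t where "t = \<bar>g $ k\<bar> / (g $ i * (d \<bullet> d))"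
    have t0: "t \<ge> 0" unfolding t_def using gi dd by simp
    define x where "x = t *\<^sub>R d"
    define ek where "ek = exp (column k A \<bullet> x)"
    have ek: "ek > 0" unfolding ek_def by simp
    have ei: "exp (column i A \<bullet> x) = ek * exp (t * (d \<bullet> d))"
    proof -
      have "column i A \<bullet> x = column k A \<bullet> x + t * (d \<bullet> d)"
        unfolding x_def d_def by (simp add: inner_diff_left inner_diff_right inner_scaleR_right algebra_simps)
      thus ?thesis unfolding ek_def by (simp add: exp_add)
    qed
    have e1: "0 = g $ k * ek + (\<Sum>j\<in>UNIV - {k}. g $ j * exp (column j A \<bullet> x))"
      using z sumform[of x] unfolding ek_def by (simp add: sum.remove)
    have e2: "(\<Sum>j\<in>UNIV - {k}. g $ j * exp (column j A \<bullet> x)) \<ge> g $ i * exp (column i A \<bullet> x)"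
      by (rule member_le_sum) (use ik gnn in auto)
    have "g $ k * ek + g $ i * (ek * exp (t * (d \<bullet> d))) \<le> 0" using e1 e2 ei by simp
    hence "ek * (g $ k + g $ i * exp (t * (d \<bullet> d))) \<le> 0" by (simp add: algebra_simps)
    hence le: "g $ k + g $ i * exp (t * (d \<bullet> d)) \<le> 0" using ek
      by (simp add: mult_le_0_iff)
    have "exp (t * (d \<bullet> d)) \<ge> 1 + t * (d \<bullet> d)" by (rule exp_ge_add_one_self)
    hence "g $ i * exp (t * (d \<bullet> d)) \<ge> g $ i * (1 + t * (d \<bullet> d))" using gi by simp
    moreover have "g $ i * (1 + t * (d \<bullet> d)) = g $ i + \<bar>g $ k\<bar>"
      unfolding t_def using gi dd by (simp add: field_simps)
    ultimately show False using le gi by linarith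
  qed
  have "0 = (\<Sum>j\<in>UNIV. g $ j * exp (column j A \<bullet> 0))" using z sumform[of 0] by simp
  also have "\<dots> = g $ k" using nz by (simp add: sum.remove[of UNIV k] sum.neutral)
  finally have "g $ k = 0" by simp
  thus ?thesis using nz by (metis vec_eq_iff zero_index)
qed


definition PP :: "real^'m^'n \<Rightarrow> (real^'m^'m) set" where
  "PP A = {G. \<forall>k. G $ k \<in> C_AGE A k}"

definition SS :: "real^'m^'m \<Rightarrow> real^'m" where
  "SS G = (\<Sum>k\<in>UNIV. G $ k)"

lemma closed_PP: "closed (PP A)"
proof -
  have "PP A = (\<Inter>k. (\<lambda>G. G $ k) -` C_AGE A k)" unfolding PP_def by auto
  thus ?thesis by (auto intro!: closed_INT closed_vimage_vec_nth closed_AGE)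
qed

lemma PP_scale: "G \<in> PP A \<Longrightarrow> t \<ge> 0 \<Longrightarrow> t *\<^sub>R G \<in> PP A"
  unfolding PP_def by (auto intro: AGE_scale)

lemma SS_scale: "SS (t *\<^sub>R G) = t *\<^sub>R SS G"
  unfolding SS_def by (simp add: scaleR_sum_right)

lemma continuous_SS: "continuous_on S SS"
  unfolding SS_def by (intro continuous_intros)

lemma PP_pointed:
  fixes A :: "real^'m^'n"
  assumes inj: "inj (\<lambda>i. column i A)" and G: "G \<in> PP A" and z: "SS G = 0"
  shows "G = 0"
proof -
  have nn: "\<And>k x. 0 \<le> G $ k \<bullet> WW A x" using G unfolding PP_def C_AGE_def NNS_inner by auto
  have "\<And>x. (\<Sum>k\<in>UNIV. G $ k \<bullet> WW A x) = 0"
    using z unfolding SS_def by (simp add: inner_sum_left[symmetric])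
  hence "\<And>x k. G $ k \<bullet> WW A x = 0" using nn by (simp add: sum_nonneg_eq_0_iff)
  hence "\<And>k. G $ k = 0" using AGE_pointed[OF inj] G unfolding PP_def by blast
  thus ?thesis by (simp add: vec_eq_iff)
qed

lemma PP_bound:
  fixes A :: "real^'m^'n"
  assumes inj: "inj (\<lambda>i. column i A)"
  shows "\<exists>\<mu>>0. \<forall>G\<in>PP A. \<mu> * norm G \<le> norm (SS G)"
proof (cases "PP A \<inter> sphere 0 1 = {}")
  case True
  have "G = 0" if "G \<in> PP A" for G
  proof (rule ccontr)
    assume "G \<noteq> 0"
    hence "(1 / norm G) *\<^sub>R G \<in> PP A \<inter> sphere 0 1" using PP_scale[OF that] by auto
    thus False using True by auto
  qed
  hence "\<forall>G\<in>PP A. 1 * norm G \<le> norm (SS G)" by force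
  thus ?thesis by (intro exI[of _ 1]) simp
next
  case False
  have "compact (PP A \<inter> sphere 0 1)" by (intro closed_Int_compact closed_PP compact_sphere)
  moreover have "continuous_on (PP A \<inter> sphere 0 1) (\<lambda>G. norm (SS G))"
    by (intro continuous_on_norm continuous_SS)
  ultimately obtain G0 where G0: "G0 \<in> PP A \<inter> sphere 0 1"
    and min: "\<forall>G\<in>PP A \<inter> sphere 0 1. norm (SS G0) \<le> norm (SS G)"
    using continuous_attains_inf[OF _ False] by blast
  have "G0 \<noteq> 0" using G0 by auto
  hence mu: "norm (SS G0) > 0" using PP_pointed[OF inj] G0 by auto
  show ?thesis
  proof (intro exI[of _ "norm (SS G0)"] conjI mu ballI)
    fix G assume G: "G \<in> PP A"
    show "norm (SS G0) * norm G \<le> norm (SS G)"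
    proof (cases "G = 0")
      case True thus ?thesis by (simp add: SS_def)
    next
      case False
      hence "(1 / norm G) *\<^sub>R G \<in> PP A \<inter> sphere 0 1" using PP_scale[OF G] by auto
      hence "norm (SS G0) \<le> norm (SS ((1 / norm G) *\<^sub>R G))" using min by blast
      also have "\<dots> = norm (SS G) / norm G" by (simp add: SS_scale)
      finally show ?thesis using False by (simp add: field_simps)
    qed
  qed
qed

lemma closed_SAGE:
  fixes A :: "real^'m^'n"
  assumes inj: "inj (\<lambda>i. column i A)"
  shows "closed (C_SAGE A)"
proof -
  obtain \<mu> where mu: "\<mu> > 0" "\<forall>G\<in>PP A. \<mu> * norm G \<le> norm (SS G)"
    using PP_bound[OF inj] by blast
  have "c \<in> C_SAGE A" if c: "c \<in> closure (C_SAGE A)" for c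
  proof -
    define R where "R = (norm c + 1) / \<mu>"
    define Q where "Q = SS ` (PP A \<inter> cball 0 R)"
    have "compact Q" unfolding Q_def
      by (intro compact_continuous_image continuous_SS closed_Int_compact closed_PP compact_cball)
    hence cQ: "closed Q" by (rule compact_imp_closed)
    have "c \<in> closure Q" unfolding closure_approachable
    proof (intro allI impI)
      fix e :: real assume e: "e > 0"
      obtain y where y: "y \<in> C_SAGE A" "dist y c < min e 1"
        using c e unfolding closure_approachable by (meson zero_less_one min_less_iff_conj)
      then obtain f where f: "\<forall>k. f k \<in> C_AGE A k" "y = (\<Sum>k\<in>UNIV. f k)"
        unfolding C_SAGE_def by auto
      define G where "G = (\<chi> k. f k)"
      have GP: "G \<in> PP A" unfolding G_def PP_def using f by simp
      have SG: "SS G = y" unfolding SS_def G_def using f by simp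
      have "norm y \<le> norm c + 1" using y(2) norm_triangle_ineq2[of y c]
        by (simp add: dist_norm)
      hence "\<mu> * norm G \<le> norm c + 1" using mu GP SG by force
      hence "norm G \<le> R" unfolding R_def using mu by (simp add: field_simps)
      hence "y \<in> Q" unfolding Q_def using GP SG by force
      thus "\<exists>y\<in>Q. dist y c < e" using y by force
    qed
    hence "c \<in> Q" using cQ by (simp add: closure_closed)
    then obtain G where G: "G \<in> PP A" "c = SS G" unfolding Q_def by auto
    show "c \<in> C_SAGE A" unfolding C_SAGE_def
      by (rule CollectI, rule exI[of _ "\<lambda>k. G $ k"]) (use G in \<open>auto simp: PP_def SS_def\<close>)
  qed
  thus ?thesis using closure_subset_eq by blast
qed


lemma shift_inner:
  assumes "column i1 A = 0"
  shows "(c - \<gamma> *\<^sub>R axis i1 1) \<bullet> WW A x = c \<bullet> WW A x - \<gamma>"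
  using WW_i1[OF assms] by (simp add: inner_diff_left inner_axis')

lemma E_eq: "vec_exp ` range (\<lambda>x. transpose A *v x) = range (WW A)"
  by (auto simp: WW_def)

lemma hull_nonneg:
  assumes c: "c \<in> C_NNS A" and v: "v \<in> closure (convex hull range (WW A))"
  shows "c \<bullet> v \<ge> 0"
proof -
  let ?H = "{v. c \<bullet> v \<ge> 0}"
  have "range (WW A) \<subseteq> ?H" using c unfolding NNS_inner by auto
  hence "convex hull range (WW A) \<subseteq> ?H" by (intro hull_minimal convex_halfspace_ge)
  hence "closure (convex hull range (WW A)) \<subseteq> ?H" by (intro closure_minimal closed_halfspace_ge)
  thus ?thesis using v by auto
qed

lemma f_star_lt: "f_star A c < \<infinity>"
proof -
  have "f_star A c \<le> ereal (Sig A c 0)" unfolding f_star_def by (rule INF_lower) simp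
  moreover have "ereal (Sig A c 0) < \<infinity>" by simp
  ultimately show ?thesis by (rule le_less_trans)
qed

lemma f_star_le_iff: "ereal \<gamma> \<le> f_star A c \<longleftrightarrow> (\<forall>x. \<gamma> \<le> Sig A c x)"
  unfolding f_star_def by (simp add: le_INF_iff)

lemma SUP_below:
  fixes F :: ereal
  assumes "F < \<infinity>"
  shows "(SUP \<gamma>\<in>{\<gamma>. ereal \<gamma> \<le> F}. ereal \<gamma>) = F"
proof (cases F)
  case (real r)
  show ?thesis
  proof (rule antisym)
    show "(SUP \<gamma>\<in>{\<gamma>. ereal \<gamma> \<le> F}. ereal \<gamma>) \<le> F" by (rule SUP_least) simp
    show "F \<le> (SUP \<gamma>\<in>{\<gamma>. ereal \<gamma> \<le> F}. ereal \<gamma>)" using real by (intro SUP_upper2[of r]) auto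
  qed
next
  case PInf with assms show ?thesis by simp
next
  case MInf
  hence "{\<gamma>. ereal \<gamma> \<le> F} = {}" by auto
  thus ?thesis using MInf by (simp add: bot_ereal_def)
qed


lemma L21:
  fixes A :: "real^'m^'n"
  assumes a1: "column i1 A = 0" and eq: "C_NNS A = C_SAGE A"
  shows "f_star A c = f_SAGE A i1 c"
proof -
  have "{\<gamma>. c - \<gamma> *\<^sub>R axis i1 1 \<in> C_SAGE A} = {\<gamma>. ereal \<gamma> \<le> f_star A c}"
    unfolding eq[symmetric] f_star_le_iff NNS_inner Sig_inner by (simp add: shift_inner[OF a1])
  thus ?thesis unfolding f_SAGE_def using SUP_below[OF f_star_lt, of A c] by metis
qed

lemma L12:
  fixes A :: "real^'m^'n"
  assumes inj: "inj (\<lambda>i. column i A)" and a1: "column i1 A = 0"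
    and H: "\<forall>c. f_star A c = f_SAGE A i1 c"
  shows "C_NNS A = C_SAGE A"
proof
  show "C_SAGE A \<subseteq> C_NNS A" by (rule SAGE_sub_NNS)
  show "C_NNS A \<subseteq> C_SAGE A"
  proof
    fix c assume c: "c \<in> C_NNS A"
    have "ereal 0 \<le> f_star A c" unfolding f_star_le_iff using c unfolding C_NNS_def by auto
    hence fs: "0 \<le> f_SAGE A i1 c" using H by (simp add: zero_ereal_def)
    have "c \<in> closure (C_SAGE A)" unfolding closure_approachable
    proof (intro allI impI)
      fix e :: real assume e: "e > 0"
      have "ereal (- (e/2)) < 0" using e by (simp add: zero_ereal_def)
      hence "ereal (- (e/2)) < f_SAGE A i1 c" using fs by (rule less_le_trans)
      then obtain \<gamma> where g: "c - \<gamma> *\<^sub>R axis i1 1 \<in> C_SAGE A" "- (e/2) < \<gamma>"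
        unfolding f_SAGE_def less_SUP_iff by auto
      have "(\<gamma> + e/2) *\<^sub>R axis i1 1 \<in> C_SAGE A" using g(2) by (intro SAGE_axis) simp
      from SAGE_add[OF g(1) this]
      have "c + (e/2) *\<^sub>R axis i1 (1::real) \<in> C_SAGE A" by (simp add: algebra_simps)
      moreover have "dist (c + (e/2) *\<^sub>R axis i1 (1::real)) c < e"
        using e by (simp add: dist_norm)
      ultimately show "\<exists>y\<in>C_SAGE A. dist y c < e" by blast
    qed
    thus "c \<in> C_SAGE A" using closed_SAGE[OF inj] by (simp add: closure_closed)
  qed
qed

lemma L23:
  fixes A :: "real^'m^'n"
  assumes a1: "column i1 A = 0" and eq: "C_NNS A = C_SAGE A"
  shows "{v \<in> dual_cone (C_SAGE A). v $ i1 = 1} \<subseteq> closure (convex hull range (WW A))"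
proof
  fix v assume v: "v \<in> {v \<in> dual_cone (C_SAGE A). v $ i1 = 1}"
  show "v \<in> closure (convex hull range (WW A))"
  proof (rule ccontr)
    assume nv: "v \<notin> closure (convex hull range (WW A))"
    obtain a b where ab: "a \<bullet> v < b" "\<forall>x\<in>closure (convex hull range (WW A)). b < a \<bullet> x"
      using separating_hyperplane_closed_point[OF convex_closure[OF convex_convex_hull] closed_closure nv]
      by blast
    define c where "c = a - b *\<^sub>R axis i1 1"
    have "c \<in> C_NNS A" unfolding NNS_inner c_def
    proof (intro CollectI allI, subst shift_inner[OF a1])
      fix x
      have "WW A x \<in> convex hull range (WW A)" by (rule hull_inc) simp
      hence "WW A x \<in> closure (convex hull range (WW A))"
        using closure_subset by blast
      hence "b < a \<bullet> WW A x" using ab(2) by blast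
      thus "0 \<le> a \<bullet> WW A x - b" by simp
    qed
    hence "c \<in> C_SAGE A" using eq by simp
    hence "v \<bullet> c \<ge> 0" using v unfolding dual_cone_def by auto
    moreover have "v \<bullet> c = v \<bullet> a - b * (v $ i1)"
      unfolding c_def by (simp add: inner_diff_right inner_axis)
    moreover have "v \<bullet> a = a \<bullet> v" by (rule inner_commute)
    moreover have "v $ i1 = 1" using v by simp
    ultimately show False using ab(1) by simp
  qed
qed

lemma L32:
  fixes A :: "real^'m^'n"
  assumes inj: "inj (\<lambda>i. column i A)" and a1: "column i1 A = 0"
    and H: "{v \<in> dual_cone (C_SAGE A). v $ i1 = 1} \<subseteq> closure (convex hull range (WW A))"
  shows "C_NNS A = C_SAGE A"
proof
  show "C_SAGE A \<subseteq> C_NNS A" by (rule SAGE_sub_NNS)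
  show "C_NNS A \<subseteq> C_SAGE A"
  proof
    fix c assume c: "c \<in> C_NNS A"
    show "c \<in> C_SAGE A"
    proof (rule ccontr)
      assume nc: "c \<notin> C_SAGE A"
      obtain a b where ab: "a \<bullet> c < b" "\<forall>x\<in>C_SAGE A. b < a \<bullet> x"
        using separating_hyperplane_closed_point[OF convex_SAGE closed_SAGE[OF inj] nc] by blast
      have b0: "b < 0" using ab(2) SAGE_zero by force
      have adual: "a \<bullet> s \<ge> 0" if s: "s \<in> C_SAGE A" for s
      proof (rule ccontr)
        assume "\<not> a \<bullet> s \<ge> 0"
        hence as: "a \<bullet> s < 0" by simp
        define t where "t = b / (a \<bullet> s)"
        have t: "t \<ge> 0" unfolding t_def using as b0 by (simp add: divide_nonpos_neg)
        have "b < a \<bullet> (t *\<^sub>R s)" using ab(2) SAGE_scale[OF s t] by blast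
        moreover have "a \<bullet> (t *\<^sub>R s) = b" unfolding t_def using as by simp
        ultimately show False by simp
      qed
      define w0 where "w0 = WW A 0"
      have w0dual: "s \<bullet> w0 \<ge> 0" if "s \<in> C_SAGE A" for s
        using SAGE_sub_NNS that unfolding NNS_inner w0_def by auto
      have cw0: "c \<bullet> w0 \<ge> 0" using c unfolding NNS_inner w0_def by auto
      have ac: "a \<bullet> c < 0" using ab(1) b0 by simp
      define \<epsilon> where "\<epsilon> = - (a \<bullet> c) / (c \<bullet> w0 + 1)"
      have eps: "\<epsilon> > 0" unfolding \<epsilon>_def using ac cw0 by (intro divide_pos_pos) simp_all
      have "\<epsilon> * (c \<bullet> w0) < - (a \<bullet> c)"
      proof -
        have "\<epsilon> * (c \<bullet> w0 + 1) = - (a \<bullet> c)" unfolding \<epsilon>_def using cw0 by simp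
        thus ?thesis using eps by (simp add: algebra_simps)
      qed
      define v' where "v' = a + \<epsilon> *\<^sub>R w0"
      have v'c: "c \<bullet> v' < 0" unfolding v'_def using \<open>\<epsilon> * (c \<bullet> w0) < - (a \<bullet> c)\<close>
        by (simp add: inner_add_right inner_commute)
      have v'dual: "v' \<bullet> s \<ge> 0" if "s \<in> C_SAGE A" for s
      proof -
        have "v' \<bullet> s = a \<bullet> s + \<epsilon> * (w0 \<bullet> s)" unfolding v'_def by (simp add: inner_add_left)
        moreover have "w0 \<bullet> s = s \<bullet> w0" by (rule inner_commute)
        ultimately show ?thesis using adual[OF that] w0dual[OF that] eps by simp
      qed
      have "a $ i1 \<ge> 0" using adual[OF SAGE_axis[of 1 i1 A]] by (simp add: inner_axis)
      moreover have "w0 $ i1 = 1" unfolding w0_def using WW_i1[OF a1] by simp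
      ultimately have p: "v' $ i1 > 0" unfolding v'_def using eps by simp
      define v where "v = (1 / v' $ i1) *\<^sub>R v'"
      have "v \<in> {v \<in> dual_cone (C_SAGE A). v $ i1 = 1}"
        unfolding v_def dual_cone_def using p v'dual by (auto simp: inner_scaleR_left)
      hence "v \<in> closure (convex hull range (WW A))" using H by blast
      hence "c \<bullet> v \<ge> 0" by (rule hull_nonneg[OF c])
      moreover have "c \<bullet> v < 0" unfolding v_def using p v'c
        by (simp add: inner_scaleR_right divide_neg_pos)
      ultimately show False by simp
    qed
  qed
qed

theorem mainTheorem19:
  fixes A :: "real^'m^'n" and i1 :: 'm
  assumes distinct_cols: "inj (\<lambda>i. column i A)"
    and a1_zero: "column i1 A = 0"
  shows "((\<forall>c. f_star A c = f_SAGE A i1 c) \<longleftrightarrow> C_NNS A = C_SAGE A)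
       \<and> (C_NNS A = C_SAGE A \<longleftrightarrow>
           {v \<in> dual_cone (C_SAGE A). v $ i1 = 1}
             \<subseteq> closure (convex hull (vec_exp ` range (\<lambda>x. transpose A *v x))))"
  unfolding E_eq
proof (intro conjI iffI)
  assume "\<forall>c. f_star A c = f_SAGE A i1 c"
  thus "C_NNS A = C_SAGE A" by (rule L12[OF distinct_cols a1_zero])
next
  assume "C_NNS A = C_SAGE A"
  thus "\<forall>c. f_star A c = f_SAGE A i1 c" using L21[OF a1_zero] by blast
next
  assume "C_NNS A = C_SAGE A"
  thus "{v \<in> dual_cone (C_SAGE A). v $ i1 = 1} \<subseteq> closure (convex hull range (WW A))"
    by (rule L23[OF a1_zero])
next
  assume "{v \<in> dual_cone (C_SAGE A). v $ i1 = 1} \<subseteq> closure (convex hull range (WW A))"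
  thus "C_NNS A = C_SAGE A" by (rule L32[OF distinct_cols a1_zero])
qed

end
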